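(* Let $m,n\geq 6$ and $r\geq 3$. Then $\rho(\mathcal{P}^r_{m-5}\cup\mathcal{W}_{n-1})=\rho(\mathcal{P}^r_{n-5}\cup\mathcal{W}_{m-1})$ and $ME(\mathcal{P}^r_{m-5}\cup\mathcal{W}_{n-1})=ME(\mathcal{P}^r_{n-5}\cup\mathcal{W}_{m-1})$.
   Context: The loose path $\mathcal{P}^r_t=v_1e_1v_2\cdots v_te_tv_{t+1}$ of length $t\geq 1$ has edges $e_i=\{v_i,u_{i,1},\dots,u_{i,r-2},v_{i+1}\}$, all listed vertices distinct. For $N\geq 5$, $\mathcal{W}_N$ is obtained from $\mathcal{P}^r_{N-2}$ (vertices $v_1,\dots,v_{N-1}$) by attaching one pendent edge (an edge containing one existing vertex and $r-1$ new vertices) at $v_2$ and one at $v_{N-2}$. $\cup$ denotes disjoint union. For an $r$-uniform hypergraph $\mathcal{K}$ on $n'$ vertices, $m(\mathcal{K},k)$ is the number of sets of $k$ pairwise disjoint edges ($m(\mathcal{K},0)=1$), $\varphi(\mathcal{K},x)=\sum_{k\geq0}(-1)^km(\mathcal{K},k)x^{n'-kr}$ is the matching polynomial, and $ME(\mathcal{K})$ is the sum of absolute values of all roots (with multiplicity) of $\varphi(\mathcal{K},x)$. The adjacency tensor has entries $a_{i_1\cdots i_r}=1/(r-1)!$ if $\{i_1,\dots,i_r\}$ is an edge and $0$ otherwise; $\lambda$ is an eigenvalue if some nonzero $x\in\mathbb{C}^{n'}$ satisfies $\sum_{i_2,\dots,i_r}a_{ii_2\cdots i_r}x_{i_2}\cdots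 x_{i_r}=\lambda x_i^{r-1}$ for all $i$; $\rho(\mathcal{K})$ is the maximum modulus of the eigenvalues. *)

theory Defs
  imports "HOL-Computational_Algebra.Polynomial" "HOL-Computational_Algebra.Fundamental_Theorem_Algebra"
begin

type_synonym 'a hg = "'a set \<times> 'a set set"

definition hverts :: "'a hg \<Rightarrow> 'a set" where "hverts H = fst H"
definition hedges :: "'a hg \<Rightarrow> 'a set set" where "hedges H = snd H"

definition hg_union :: "'a hg \<Rightarrow> 'b hg \<Rightarrow> ('a + 'b) hg" where
  "hg_union H K = (Inl ` hverts H \<union> Inr ` hverts K,
                   (\<lambda>e. Inl ` e) ` hedges H \<union> (\<lambda>e. Inr ` e) ` hedges K)"

text \<open>Loose path of length t: v_i = (i,0) for 1 \<le> i \<le> t+1, u_{i,j} = (i,j) for 1 \<le> j \<le> r-2.\<close>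
definition lp_edge :: "nat \<Rightarrow> nat \<Rightarrow> (nat \<times> nat) set" where
  "lp_edge r i = {(i,0), (Suc i,0)} \<union> {(i,j) | j. 1 \<le> j \<and> j \<le> r - 2}"

definition loose_path_edges :: "nat \<Rightarrow> nat \<Rightarrow> (nat \<times> nat) set set" where
  "loose_path_edges r t = lp_edge r ` {1..t}"

definition loose_path :: "nat \<Rightarrow> nat \<Rightarrow> (nat \<times> nat) hg" where
  "loose_path r t = (\<Union>(loose_path_edges r t), loose_path_edges r t)"

text \<open>W_N: loose path of length N-2 (vertices v_1..v_{N-1}) with a pendent edge at v_2
  (new vertices (0,j)) and one at v_{N-2} (new vertices (N,j)), 1 \<le> j \<le> r-1.\<close>
definition W_edges :: "nat \<Rightarrow> nat \<Rightarrow> (nat \<times> nat) set set" where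
  "W_edges r N = loose_path_edges r (N - 2)
     \<union> { {(2,0)} \<union> {(0,j) | j. 1 \<le> j \<and> j \<le> r - 1},
         {(N - 2,0)} \<union> {(N,j) | j. 1 \<le> j \<and> j \<le> r - 1} }"

definition W_hg :: "nat \<Rightarrow> nat \<Rightarrow> (nat \<times> nat) hg" where
  "W_hg r N = (\<Union>(W_edges r N), W_edges r N)"

definition num_matchings :: "'a hg \<Rightarrow> nat \<Rightarrow> nat" where
  "num_matchings H k = card {M. M \<subseteq> hedges H \<and> card M = k \<and>
      (\<forall>e\<in>M. \<forall>f\<in>M. e \<noteq> f \<longrightarrow> e \<inter> f = {})}"

text \<open>Matching polynomial of an r-uniform hypergraph (terms with k r > n' vanish since m = 0 there).\<close>
definition matching_poly :: "nat \<Rightarrow> 'a hg \<Rightarrow> real poly" where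
  "matching_poly r H = (\<Sum>k \<in> {k. k * r \<le> card (hverts H)}.
       monom ((-1) ^ k * of_nat (num_matchings H k)) (card (hverts H) - k * r))"

definition matching_energy :: "nat \<Rightarrow> 'a hg \<Rightarrow> real" where
  "matching_energy r H =
     (let p = map_poly complex_of_real (matching_poly r H) in
      \<Sum>z \<in> {z. poly p z = 0}. of_nat (order z p) * cmod z)"

definition adj_tensor :: "nat \<Rightarrow> 'a hg \<Rightarrow> 'a list \<Rightarrow> complex" where
  "adj_tensor r H is = (if set is \<in> hedges H then 1 / of_nat (fact (r - 1)) else 0)"

definition tensor_eigenvalue :: "nat \<Rightarrow> 'a hg \<Rightarrow> complex \<Rightarrow> bool" where
  "tensor_eigenvalue r H lam \<longleftrightarrow>
     (\<exists>x :: 'a \<Rightarrow> complex. (\<exists>i\<in>hverts H. x i \<noteq> 0) \<and>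
        (\<forall>i\<in>hverts H.
           (\<Sum>js \<in> {js. set js \<subseteq> hverts H \<and> length js = r - 1}.
               adj_tensor r H (i # js) * prod_list (map x js)) = lam * x i ^ (r - 1)))"

definition spectral_radius :: "nat \<Rightarrow> 'a hg \<Rightarrow> real" where
  "spectral_radius r H = Sup {cmod lam | lam. tensor_eigenvalue r H lam}"

end

theory Submission
  imports Defs
begin


definition matchings :: "'a set set \<Rightarrow> 'a set set set" where
  "matchings E = {M. M \<subseteq> E \<and> (\<forall>e\<in>M. \<forall>f\<in>M. e \<noteq> f \<longrightarrow> e \<inter> f = {})}"

definition mpoly :: "'a set set \<Rightarrow> int poly" where
  "mpoly E = (\<Sum>M\<in>matchings E. monom 1 (card M))"

lemma finite_matchings: "finite E \<Longrightarrow> finite (matchings E)"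
  unfolding matchings_def by (rule finite_subset[of _ "Pow E"]) auto

lemma coeff_mpoly:
  assumes "finite E"
  shows "coeff (mpoly E) k = int (card {M. M \<subseteq> E \<and> card M = k \<and> (\<forall>e\<in>M. \<forall>f\<in>M. e \<noteq> f \<longrightarrow> e \<inter> f = {})})"
proof -
  have "coeff (mpoly E) k = (\<Sum>M\<in>matchings E. if card M = k then 1 else 0)"
    unfolding mpoly_def by (simp add: coeff_sum coeff_monom)
  also have "\<dots> = int (card {M \<in> matchings E. card M = k})"
    using finite_matchings[OF assms] by (simp add: sum.If_cases Int_def)
  also have "{M \<in> matchings E. card M = k} = {M. M \<subseteq> E \<and> card M = k \<and> (\<forall>e\<in>M. \<forall>f\<in>M. e \<noteq> f \<longrightarrow> e \<inter> f = {})}"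
    unfolding matchings_def by auto
  finally show ?thesis .
qed

lemma mpoly_empty[simp]: "mpoly {} = 1"
proof -
  have "matchings ({}::'a set set) = {{}}" unfolding matchings_def by auto
  then show ?thesis unfolding mpoly_def by (simp add: one_pCons)
qed

lemma mpoly_delete:
  assumes fin: "finite E" and e: "e \<in> E"
  shows "mpoly E = mpoly (E - {e}) + monom 1 1 * mpoly {f \<in> E - {e}. f \<inter> e = {}}"
proof -
  let ?D = "{f \<in> E - {e}. f \<inter> e = {}}"
  have split: "matchings E = matchings (E - {e}) \<union> insert e ` matchings ?D"
  proof (intro equalityI subsetI)
    fix M assume M: "M \<in> matchings E"
    show "M \<in> matchings (E - {e}) \<union> insert e ` matchings ?D"
    proof (cases "e \<in> M")
      case True
      have "M - {e} \<in> matchings ?D" using M True unfolding matchings_def by auto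
      moreover have "M = insert e (M - {e})" using True by auto
      ultimately show ?thesis by blast
    next
      case False
      then show ?thesis using M unfolding matchings_def by auto
    qed
  next
    fix M assume "M \<in> matchings (E - {e}) \<union> insert e ` matchings ?D"
    then show "M \<in> matchings E"
    proof
      assume "M \<in> matchings (E - {e})" then show ?thesis unfolding matchings_def by blast
    next
      assume "M \<in> insert e ` matchings ?D"
      then obtain M' where M': "M' \<in> matchings ?D" "M = insert e M'" by blast
      then have a: "M' \<subseteq> ?D" "\<forall>x\<in>M'. \<forall>y\<in>M'. x \<noteq> y \<longrightarrow> x \<inter> y = {}"
        unfolding matchings_def by auto
      show ?thesis unfolding matchings_def
      proof (intro CollectI conjI ballI impI)
        show "M \<subseteq> E" using a(1) M'(2) e by blast
      next
        fix x y assume xy: "x \<in> M" "y \<in> M" "x \<noteq> y"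
        show "x \<inter> y = {}"
        proof (cases "x = e")
          case True then have "y \<in> ?D" using xy M'(2) a(1) by blast
          then show ?thesis using True by (simp add: Int_commute)
        next
          case False
          show ?thesis
          proof (cases "y = e")
            case True then have "x \<in> ?D" using xy M'(2) a(1) False by blast
            then show ?thesis using True by simp
          next
            case False2: False
            then show ?thesis using False xy M'(2) a(2) by blast
          qed
        qed
      qed
    qed
  qed
  have disj: "matchings (E - {e}) \<inter> insert e ` matchings ?D = {}"
    unfolding matchings_def by auto
  have inj: "inj_on (insert e) (matchings ?D)"
  proof (rule inj_onI)
    fix A B assume "A \<in> matchings ?D" "B \<in> matchings ?D" "insert e A = insert e B"
    then have "e \<notin> A" "e \<notin> B" "insert e A = insert e B" unfolding matchings_def by auto
    then show "A = B" using insert_ident by metis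
  qed
  have finD: "finite (matchings ?D)" using fin by (intro finite_matchings) simp
  have "mpoly E = mpoly (E - {e}) + (\<Sum>M\<in>insert e ` matchings ?D. monom (1::int) (card M))"
    unfolding mpoly_def split
    by (rule sum.union_disjoint) (use fin finD disj finite_matchings[of "E - {e}"] in simp_all)
  also have "(\<Sum>M\<in>insert e ` matchings ?D. monom (1::int) (card M)) = (\<Sum>M\<in>matchings ?D. monom 1 (card (insert e M)))"
    by (subst sum.reindex[OF inj]) simp
  also have "\<dots> = (\<Sum>M\<in>matchings ?D. monom 1 1 * monom 1 (card M))"
    apply (rule sum.cong[OF refl])
    subgoal premises pr for M
    proof -
      have eM: "e \<notin> M" and ME: "M \<subseteq> E" using pr unfolding matchings_def by auto
      have "finite M" using finite_subset[OF ME fin] .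
      then show ?thesis using eM by (simp add: mult_monom)
    qed
    done
  also have "\<dots> = monom 1 1 * mpoly ?D" unfolding mpoly_def by (simp add: sum_distrib_left)
  finally show ?thesis .
qed

lemma mpoly_union:
  assumes f1: "finite E1" and f2: "finite E2"
    and d: "\<And>e f. e \<in> E1 \<Longrightarrow> f \<in> E2 \<Longrightarrow> e \<inter> f = {}" and d2: "E1 \<inter> E2 = {}"
  shows "mpoly (E1 \<union> E2) = mpoly E1 * mpoly E2"
proof -
  let ?g = "\<lambda>(M1, M2). M1 \<union> M2"
  have inj: "inj_on ?g (matchings E1 \<times> matchings E2)"
  proof (rule inj_onI, clarify)
    fix A B C D assume "A \<in> matchings E1" "B \<in> matchings E2" "C \<in> matchings E1" "D \<in> matchings E2"
      and eq: "A \<union> B = C \<union> D"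
    then have "A \<subseteq> E1" "B \<subseteq> E2" "C \<subseteq> E1" "D \<subseteq> E2" unfolding matchings_def by auto
    note sub = this
    have "A = (A \<union> B) \<inter> E1" using sub d2 by auto
    also have "\<dots> = (C \<union> D) \<inter> E1" by (simp only: eq)
    also have "\<dots> = C" using sub d2 by auto
    finally have 1: "A = C" .
    have "B = (A \<union> B) \<inter> E2" using sub d2 by auto
    also have "\<dots> = (C \<union> D) \<inter> E2" by (simp only: eq)
    also have "\<dots> = D" using sub d2 by auto
    finally show "A = C \<and> B = D" using 1 by simp
  qed
  have img: "?g ` (matchings E1 \<times> matchings E2) = matchings (E1 \<union> E2)"
  proof (intro equalityI subsetI)
    fix M assume "M \<in> ?g ` (matchings E1 \<times> matchings E2)"
    then obtain A B where "A \<in> matchings E1" "B \<in> matchings E2" "M = A \<union> B" by auto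
    then have A: "A \<subseteq> E1" "\<forall>e\<in>A. \<forall>f\<in>A. e \<noteq> f \<longrightarrow> e \<inter> f = {}"
      and B: "B \<subseteq> E2" "\<forall>e\<in>B. \<forall>f\<in>B. e \<noteq> f \<longrightarrow> e \<inter> f = {}"
      and MAB: "M = A \<union> B" unfolding matchings_def by auto
    show "M \<in> matchings (E1 \<union> E2)" unfolding matchings_def
    proof (intro CollectI conjI ballI impI)
      show "M \<subseteq> E1 \<union> E2" using A B MAB by auto
    next
      fix e f assume ef: "e \<in> M" "f \<in> M" "e \<noteq> f"
      show "e \<inter> f = {}"
      proof (cases "e \<in> A")
        case True
        then show ?thesis
        proof (cases "f \<in> A")
          case False then have "f \<in> B" using ef MAB by auto
          then show ?thesis using d[of e f] True A(1) B(1) by blast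
        qed (use A ef in auto)
      next
        case False then have eB: "e \<in> B" using ef MAB by auto
        show ?thesis
        proof (cases "f \<in> A")
          case True then show ?thesis using d[of f e] eB A(1) B(1) by (simp add: Int_commute subset_iff)
        next
          case False then have "f \<in> B" using ef MAB by auto
          then show ?thesis using B eB ef by auto
        qed
      qed
    qed
  next
    fix M assume M: "M \<in> matchings (E1 \<union> E2)"
    then have "M \<inter> E1 \<in> matchings E1" "M \<inter> E2 \<in> matchings E2" "M = ?g (M \<inter> E1, M \<inter> E2)"
      unfolding matchings_def by auto
    then show "M \<in> ?g ` (matchings E1 \<times> matchings E2)" by blast
  qed
  have "mpoly E1 * mpoly E2 = (\<Sum>a\<in>matchings E1. \<Sum>b\<in>matchings E2. monom 1 (card a) * monom 1 (card b))"
    unfolding mpoly_def by (rule sum_product)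
  also have "\<dots> = (\<Sum>p\<in>matchings E1 \<times> matchings E2. monom 1 (card (fst p)) * monom 1 (card (snd p)))"
    unfolding sum.cartesian_product by (rule sum.cong[OF refl]) (simp only: split_def)
  also have "\<dots> = (\<Sum>p\<in>matchings E1 \<times> matchings E2. monom 1 (card (fst p \<union> snd p)))"
  proof (rule sum.cong[OF refl])
    fix p assume "p \<in> matchings E1 \<times> matchings E2"
    then obtain A B where p: "p = (A, B)" "A \<in> matchings E1" "B \<in> matchings E2" by auto
    then have "A \<subseteq> E1" "B \<subseteq> E2" unfolding matchings_def by auto
    then have fAB: "finite A" "finite B" using finite_subset f1 f2 by (metis, metis)
    then have "card (A \<union> B) = card A + card B"
      using d2 \<open>A \<subseteq> E1\<close> \<open>B \<subseteq> E2\<close> by (intro card_Un_disjoint) auto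
    then show "monom 1 (card (fst p)) * monom 1 (card (snd p)) = monom (1::int) (card (fst p \<union> snd p))"
      by (simp add: mult_monom p)
  qed
  also have "\<dots> = mpoly (E1 \<union> E2)"
  proof -
    have eq: "sum (\<lambda>M. monom (1::int) (card M)) (?g ` (matchings E1 \<times> matchings E2))
        = sum ((\<lambda>M. monom 1 (card M)) \<circ> ?g) (matchings E1 \<times> matchings E2)"
      by (rule sum.reindex[OF inj])
    have h: "((\<lambda>M. monom (1::int) (card M)) \<circ> ?g) = (\<lambda>p. monom 1 (card (fst p \<union> snd p)))"
      by (rule ext) (simp only: comp_def case_prod_beta)
    show ?thesis using eq unfolding mpoly_def img h by (rule sym)
  qed
  finally show ?thesis by (rule sym)
qed

lemma mpoly_image:
  assumes "inj f" "finite E"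
  shows "mpoly ((`) f ` E) = mpoly E"
proof -
  have injF: "inj ((`) f)" by (rule injI) (simp add: inj_image_eq_iff[OF assms(1)])
  have injFF: "inj_on ((`) ((`) f)) (matchings E)"
    by (rule inj_onI) (simp add: inj_image_eq_iff[OF injF])
  have disj: "f ` e \<inter> f ` g = {} \<longleftrightarrow> e \<inter> g = {}" for e g
    by (metis image_Int[OF assms(1)] image_is_empty)
  have img: "(`) ((`) f) ` matchings E = matchings ((`) f ` E)"
  proof (intro equalityI subsetI)
    fix M assume "M \<in> (`) ((`) f) ` matchings E"
    then obtain M0 where M0: "M0 \<in> matchings E" "M = (`) f ` M0" by blast
    have M0E: "M0 \<subseteq> E" and M0d: "\<forall>e\<in>M0. \<forall>g\<in>M0. e \<noteq> g \<longrightarrow> e \<inter> g = {}"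
      using M0(1) unfolding matchings_def by blast+
    show "M \<in> matchings ((`) f ` E)" unfolding matchings_def
    proof (intro CollectI conjI ballI impI)
      show "M \<subseteq> (`) f ` E" using M0E M0(2) by (simp add: image_mono)
    next
      fix a b assume ab: "a \<in> M" "b \<in> M" "a \<noteq> b"
      then obtain e g where eg: "e \<in> M0" "g \<in> M0" "a = f ` e" "b = f ` g"
        using M0(2) by blast
      then have "e \<noteq> g" using ab by blast
      then have "e \<inter> g = {}" using M0d eg by blast
      then show "a \<inter> b = {}" using eg disj by simp
    qed
  next
    fix M assume M: "M \<in> matchings ((`) f ` E)"
    have Md: "\<forall>a\<in>M. \<forall>b\<in>M. a \<noteq> b \<longrightarrow> a \<inter> b = {}" using M unfolding matchings_def by blast
    have "M \<subseteq> (`) f ` E" using M unfolding matchings_def by blast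
    then obtain M0 where M0: "M0 \<subseteq> E" "M = (`) f ` M0" by (meson subset_image_iff)
    have "M0 \<in> matchings E" unfolding matchings_def
    proof (intro CollectI conjI ballI impI)
      fix e g assume egM: "e \<in> M0" "g \<in> M0" "e \<noteq> g"
      have "f ` e \<noteq> f ` g" using egM(3) injF by (metis injD)
      moreover have "f ` e \<in> M" "f ` g \<in> M" using egM M0(2) by blast+
      ultimately have "f ` e \<inter> f ` g = {}" using Md by blast
      then show "e \<inter> g = {}" using disj by simp
    qed (use M0 in blast)
    then show "M \<in> (`) ((`) f) ` matchings E" using M0 by blast
  qed
  have "mpoly ((`) f ` E) = (\<Sum>M\<in>matchings E. monom 1 (card ((`) f ` M)))"
    unfolding mpoly_def img[symmetric] by (subst sum.reindex[OF injFF]) (simp add: comp_def)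
  also have "\<dots> = mpoly E" unfolding mpoly_def
    by (rule sum.cong[OF refl]) (simp add: card_image inj_on_subset[OF injF] inj_on_subset[OF assms(1)])
  finally show ?thesis .
qed


fun J :: "nat \<Rightarrow> int poly" where
  "J 0 = 1" | "J (Suc 0) = 1" | "J (Suc (Suc n)) = J (Suc n) + monom 1 1 * J n"

lemma mem_lp: "(x, y) \<in> lp_edge r i \<longleftrightarrow> (y = 0 \<and> (x = i \<or> x = Suc i)) \<or> (x = i \<and> 1 \<le> y \<and> y \<le> r - 2)"
  unfolding lp_edge_def by auto

lemma lp_inj: "inj (lp_edge r)"
proof (rule injI)
  fix i j assume "lp_edge r i = lp_edge r j"
  moreover have "(i, 0) \<in> lp_edge r i" "(Suc i, 0) \<in> lp_edge r i" by (simp_all add: mem_lp)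
  ultimately have "(i, 0) \<in> lp_edge r j" "(Suc i, 0) \<in> lp_edge r j" by simp_all
  then have "i = j \<or> i = Suc j" "Suc i = j \<or> Suc i = Suc j" by (simp_all add: mem_lp)
  then show "i = j" by presburger
qed

lemma lp_disj: "lp_edge r i \<inter> lp_edge r j = {} \<longleftrightarrow> (i \<noteq> j \<and> i \<noteq> Suc j \<and> j \<noteq> Suc i)"
proof
  assume a: "lp_edge r i \<inter> lp_edge r j = {}"
  have "(i, 0) \<in> lp_edge r i" "(j, 0) \<in> lp_edge r j" by (simp_all add: mem_lp)
  then have "(i,0) \<notin> lp_edge r j" "(j,0) \<notin> lp_edge r i" using a by blast+
  then show "i \<noteq> j \<and> i \<noteq> Suc j \<and> j \<noteq> Suc i" by (auto simp: mem_lp)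
next
  assume "i \<noteq> j \<and> i \<noteq> Suc j \<and> j \<noteq> Suc i"
  then show "lp_edge r i \<inter> lp_edge r j = {}" by (auto simp: mem_lp)
qed

lemma image_filter_diff:
  assumes "inj g"
  shows "{f \<in> g ` S - {g c}. P f} = g ` {i \<in> S. i \<noteq> c \<and> P (g i)}"
  using assms by (auto simp: inj_eq)

lemma mpoly_path: "mpoly (lp_edge r ` {a+1..a+t}) = J (Suc t)"
proof (induction t rule: less_induct)
  case (less t)
  show ?case
  proof (cases t)
    case 0
    then show ?thesis by simp
  next
    case (Suc k)
    let ?e = "lp_edge r (a + Suc k)"
    have e: "?e \<in> lp_edge r ` {a+1..a+t}" using Suc by auto
    have 1: "lp_edge r ` {a+1..a+t} - {?e} = lp_edge r ` {a+1..a+k}"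
    proof -
      have "lp_edge r ` {a+1..a+t} - {?e} = lp_edge r ` ({a+1..a+t} - {a + Suc k})"
        using image_set_diff[OF lp_inj[of r], of "{a+1..a+t}" "{a + Suc k}"] by simp
      also have "{a+1..a+t} - {a + Suc k} = {a+1..a+k}" using Suc by auto
      finally show ?thesis .
    qed
    have 2: "{f \<in> lp_edge r ` {a+1..a+t} - {?e}. f \<inter> ?e = {}} = lp_edge r ` {i \<in> {a+1..a+t}. i \<noteq> a + Suc k \<and> lp_edge r i \<inter> ?e = {}}"
      by (rule image_filter_diff[OF lp_inj])
    have 3: "{i \<in> {a+1..a+t}. i \<noteq> a + Suc k \<and> lp_edge r i \<inter> ?e = {}} = {a+1..a+(k-1)}"
      using Suc by (auto simp: lp_disj)
    have D: "{f \<in> lp_edge r ` {a+1..a+t} - {?e}. f \<inter> ?e = {}} = lp_edge r ` {a+1..a+(k-1)}"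
      by (subst 2, subst 3, rule refl)
    have kt: "k < t" using Suc by simp
    have "mpoly (lp_edge r ` {a+1..a+t}) = mpoly (lp_edge r ` {a+1..a+t} - {?e}) + monom 1 1 * mpoly {f \<in> lp_edge r ` {a+1..a+t} - {?e}. f \<inter> ?e = {}}"
      by (rule mpoly_delete[OF _ e]) simp
    also have "\<dots> = J (Suc k) + monom 1 1 * mpoly (lp_edge r ` {a+1..a+(k-1)})"
      by (subst D, subst 1, subst less.IH[OF kt], rule refl)
    also have "mpoly (lp_edge r ` {a+1..a+(k-1)}) = J k"
    proof (cases k)
      case 0 then show ?thesis by simp
    next
      case (Suc k') then show ?thesis using less[of k'] \<open>t = Suc k\<close> by simp
    qed
    finally show ?thesis using Suc by simp
  qed
qed

definition P1 :: "nat \<Rightarrow> (nat \<times> nat) set" where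
  "P1 r = {(2,0)} \<union> {(0,j) | j. 1 \<le> j \<and> j \<le> r - 1}"
definition P2 :: "nat \<Rightarrow> nat \<Rightarrow> (nat \<times> nat) set" where
  "P2 r N = {(N - 2,0)} \<union> {(N,j) | j. 1 \<le> j \<and> j \<le> r - 1}"

lemma W_edges_alt: "W_edges r N = lp_edge r ` {1..N-2} \<union> {P1 r, P2 r N}"
  unfolding W_edges_def loose_path_edges_def P1_def P2_def by auto

lemma mpoly_path_P2:
  assumes "t \<ge> 1" "r \<ge> 3" "N = c + t + 2"
  shows "mpoly (lp_edge r ` {c+1..c+t} \<union> {P2 r N}) = J (Suc t) + monom 1 1 * J (t - 1)"
proof -
  let ?E = "lp_edge r ` {c+1..c+t} \<union> {P2 r N}"
  have nin: "P2 r N \<notin> lp_edge r ` {c+1..c+t}"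
  proof
    assume "P2 r N \<in> lp_edge r ` {c+1..c+t}"
    moreover have "(N, 1) \<in> P2 r N" using assms unfolding P2_def by auto
    ultimately show False using assms by (auto simp: mem_lp)
  qed
  have 1: "?E - {P2 r N} = lp_edge r ` {c+1..c+t}" using nin by auto
  have 2: "{f \<in> ?E - {P2 r N}. f \<inter> P2 r N = {}} = lp_edge r ` {c+1..c+(t-2)}"
  proof -
    have eqv: "\<And>i. i \<in> {c+1..c+t} \<Longrightarrow> lp_edge r i \<inter> P2 r N = {} \<longleftrightarrow> i \<noteq> c + t \<and> Suc i \<noteq> c + t"
      using assms unfolding P2_def by (auto simp: mem_lp)
    have "{f \<in> ?E - {P2 r N}. f \<inter> P2 r N = {}} = {f \<in> lp_edge r ` {c+1..c+t}. f \<inter> P2 r N = {}}"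
      by (subst 1) (rule refl)
    also have "\<dots> = lp_edge r ` {i \<in> {c+1..c+t}. lp_edge r i \<inter> P2 r N = {}}" by blast
    also have "{i \<in> {c+1..c+t}. lp_edge r i \<inter> P2 r N = {}} = {i \<in> {c+1..c+t}. i \<noteq> c + t \<and> Suc i \<noteq> c + t}"
      using eqv by blast
    also have "\<dots> = {c+1..c+(t-2)}" using assms(1) by auto
    finally show ?thesis .
  qed
  have "mpoly ?E = mpoly (?E - {P2 r N}) + monom 1 1 * mpoly {f \<in> ?E - {P2 r N}. f \<inter> P2 r N = {}}"
    by (rule mpoly_delete) simp_all
  also have "\<dots> = J (Suc t) + monom 1 1 * J (Suc (t - 2))"
    by (subst 2, subst 1, subst mpoly_path, subst mpoly_path, rule refl)
  also have "J (Suc (t - 2)) = J (t - 1)"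
    using assms(1) by (cases t; cases "t - 1") auto
  finally show ?thesis .
qed


lemma J_identity: "J (k+4) + 2 * monom 1 1 * J (k+2) + monom 1 1 * monom 1 1 * J k = (1 + 4 * monom 1 1) * J (k+2)"
proof -
  have a: "J (k+4) = J (k+3) + monom 1 1 * J (k+2)" by (simp add: numeral_eq_Suc)
  have b: "J (k+3) = J (k+2) + monom 1 1 * J (k+1)" by (simp add: numeral_eq_Suc)
  have c: "J (k+2) = J (k+1) + monom 1 1 * J k" by (simp add: numeral_eq_Suc)
  show ?thesis unfolding a b using c by (simp add: algebra_simps)
qed

lemma P1_notin: "r \<ge> 3 \<Longrightarrow> P1 r \<notin> lp_edge r ` S"
proof
  assume "r \<ge> 3" "P1 r \<in> lp_edge r ` S"
  moreover have "(0, 1) \<in> P1 r" using \<open>r \<ge> 3\<close> unfolding P1_def by auto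
  moreover have "(2, 0) \<in> P1 r" unfolding P1_def by auto
  ultimately show False by (auto simp: mem_lp)
qed

lemma mpoly_W:
  assumes "N \<ge> 5" "r \<ge> 3"
  shows "mpoly (W_edges r N) = (1 + 4 * monom 1 1) * J (N - 3)"
proof -
  define L where "L = N - 2"
  have L3: "L \<ge> 3" and NL: "N = L + 2" using assms unfolding L_def by auto
  let ?E = "lp_edge r ` {1..L} \<union> {P1 r, P2 r N}"
  have E: "W_edges r N = ?E" unfolding W_edges_alt L_def ..
  have P12: "P1 r \<noteq> P2 r N"
  proof
    assume "P1 r = P2 r N"
    moreover have "(0, 1) \<in> P1 r" using assms unfolding P1_def by auto
    ultimately show False using assms unfolding P2_def by auto
  qed
  have 1: "?E - {P1 r} = lp_edge r ` {1..L} \<union> {P2 r N}"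
    using P1_notin[OF assms(2)] P12 by blast
  have disjP: "P2 r N \<inter> P1 r = {}" using assms L3 NL unfolding P1_def P2_def by auto
  have eqv: "\<And>i. i \<in> {1..L} \<Longrightarrow> lp_edge r i \<inter> P1 r = {} \<longleftrightarrow> i \<noteq> 1 \<and> i \<noteq> 2"
    unfolding P1_def by (auto simp: mem_lp)
  have 2: "{f \<in> ?E - {P1 r}. f \<inter> P1 r = {}} = lp_edge r ` {3..L} \<union> {P2 r N}"
  proof -
    have "{f \<in> ?E - {P1 r}. f \<inter> P1 r = {}} = {f \<in> lp_edge r ` {1..L}. f \<inter> P1 r = {}} \<union> {P2 r N}"
      unfolding 1 using disjP by blast
    also have "{f \<in> lp_edge r ` {1..L}. f \<inter> P1 r = {}} = lp_edge r ` {i \<in> {1..L}. lp_edge r i \<inter> P1 r = {}}"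
      by blast
    also have "{i \<in> {1..L}. lp_edge r i \<inter> P1 r = {}} = {i \<in> {1..L}. i \<noteq> 1 \<and> i \<noteq> 2}"
      by (rule Collect_cong) (use eqv in blast)
    also have "\<dots> = {3..L}" by auto
    finally show ?thesis .
  qed
  have "mpoly ?E = mpoly (?E - {P1 r}) + monom 1 1 * mpoly {f \<in> ?E - {P1 r}. f \<inter> P1 r = {}}"
    by (rule mpoly_delete) simp_all
  also have "\<dots> = mpoly (lp_edge r ` {1..L} \<union> {P2 r N}) + monom 1 1 * mpoly (lp_edge r ` {3..L} \<union> {P2 r N})"
    by (subst 2, subst 1, rule refl)
  also have "mpoly (lp_edge r ` {1..L} \<union> {P2 r N}) = J (Suc L) + monom 1 1 * J (L - 1)"
    using mpoly_path_P2[of L r N 0] L3 NL assms by simp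
  also have "mpoly (lp_edge r ` {3..L} \<union> {P2 r N}) = J (Suc (L - 2)) + monom 1 1 * J (L - 2 - 1)"
    using mpoly_path_P2[of "L - 2" r N 2] L3 NL assms by simp
  also have "J (Suc L) + monom 1 1 * J (L - 1) + monom 1 1 * (J (Suc (L - 2)) + monom 1 1 * J (L - 2 - 1))
      = J ((L - 3) + 4) + 2 * monom 1 1 * J ((L - 3) + 2) + monom 1 1 * monom 1 1 * J (L - 3)"
  proof -
    have "Suc L = (L - 3) + 4" "L - 1 = (L - 3) + 2" "Suc (L - 2) = (L - 3) + 2" "L - 2 - 1 = L - 3"
      using L3 by auto
    then show ?thesis by (simp add: algebra_simps)
  qed
  also have "\<dots> = (1 + 4 * monom 1 1) * J ((L - 3) + 2)" by (rule J_identity)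
  also have "(L - 3) + 2 = N - 3" using L3 NL by simp
  finally show ?thesis unfolding E .
qed

lemma path_verts:
  assumes "a \<ge> 1"
  shows "\<Union>(lp_edge r ` {1..a}) = ({1..Suc a} \<times> {0}) \<union> ({1..a} \<times> {1..r-2})"
proof (intro equalityI subsetI)
  fix v assume "v \<in> \<Union>(lp_edge r ` {1..a})"
  then obtain i where "i \<in> {1..a}" "v \<in> lp_edge r i" by blast
  then show "v \<in> ({1..Suc a} \<times> {0}) \<union> ({1..a} \<times> {1..r-2})"
    by (cases v) (auto simp: mem_lp)
next
  fix v assume v: "v \<in> ({1..Suc a} \<times> {0}) \<union> ({1..a} \<times> {1..r-2})"
  obtain x y where xy: "v = (x, y)" by (cases v)
  show "v \<in> \<Union>(lp_edge r ` {1..a})"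
  proof (cases "y = 0")
    case True
    then have x: "1 \<le> x" "x \<le> Suc a" using v xy by auto
    show ?thesis
    proof (cases "x \<le> a")
      case True
      then have "v \<in> lp_edge r x" using xy \<open>y = 0\<close> by (simp add: mem_lp)
      then show ?thesis using x True by auto
    next
      case False
      then have "x = Suc a" using x by simp
      then have "v \<in> lp_edge r a" using xy \<open>y = 0\<close> by (simp add: mem_lp)
      then show ?thesis using assms by auto
    qed
  next
    case False
    then have "v \<in> lp_edge r x" "x \<in> {1..a}" using v xy by (auto simp: mem_lp)
    then show ?thesis by blast
  qed
qed

lemma card_path_verts:
  assumes "a \<ge> 1"
  shows "card (\<Union>(lp_edge r ` {1..a})) = Suc a + a * (r - 2)"
proof -
  have "card (({1..Suc a} \<times> {0}) \<union> ({1..a} \<times> {1..r-2})) = card ({1..Suc a} \<times> {0::nat}) + card ({1..a} \<times> {1..r-2})"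
    by (rule card_Un_disjoint) auto
  then show ?thesis unfolding path_verts[OF assms] by (simp add: card_cartesian_product)
qed

lemma W_verts:
  assumes "N \<ge> 5" "r \<ge> 3"
  shows "\<Union>(W_edges r N) = \<Union>(lp_edge r ` {1..N-2}) \<union> ({0} \<times> {1..r-1}) \<union> ({N} \<times> {1..r-1})"
proof -
  have "(2, 0) \<in> lp_edge r 2" "(N - 2, 0) \<in> lp_edge r (N - 2)" by (simp_all add: mem_lp)
  then have "(2, 0) \<in> \<Union>(lp_edge r ` {1..N-2})" "(N - 2, 0) \<in> \<Union>(lp_edge r ` {1..N-2})"
    using assms by auto
  moreover have "P1 r = insert (2,0) ({0} \<times> {1..r-1})" "P2 r N = insert (N - 2, 0) ({N} \<times> {1..r-1})"
    unfolding P1_def P2_def by auto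
  ultimately show ?thesis unfolding W_edges_alt by auto
qed

lemma card_W_verts:
  assumes "N \<ge> 5" "r \<ge> 3"
  shows "card (\<Union>(W_edges r N)) = Suc (N - 2) + (N - 2) * (r - 2) + 2 * (r - 1)"
proof -
  let ?A = "\<Union>(lp_edge r ` {1..N-2})"
  have A: "?A = ({1..Suc (N-2)} \<times> {0}) \<union> ({1..N-2} \<times> {1..r-2})"
    using path_verts[of "N-2" r] assms by simp
  have fA: "finite ?A" unfolding A by auto
  have d1: "?A \<inter> ({0} \<times> {1..r-1}) = {}" unfolding A by auto
  have d2: "(?A \<union> ({0} \<times> {1..r-1})) \<inter> ({N} \<times> {1..r-1}) = {}" unfolding A using assms by auto
  have "card (?A \<union> ({0} \<times> {1..r-1}) \<union> ({N} \<times> {1..r-1})) = card (?A \<union> ({0} \<times> {1..r-1})) + card ({N} \<times> {1..r-1})"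
    by (rule card_Un_disjoint) (use fA d2 in auto)
  also have "card (?A \<union> ({0} \<times> {1..r-1})) = card ?A + card ({0::nat} \<times> {1..r-1})"
    by (rule card_Un_disjoint) (use fA d1 in auto)
  finally have "card (\<Union>(W_edges r N)) = card ?A + (r - 1) + (r - 1)"
    unfolding W_verts[OF assms] by (simp add: card_cartesian_product)
  moreover have "card ?A = Suc (N - 2) + (N - 2) * (r - 2)" using card_path_verts[of "N-2" r] assms by simp
  ultimately show ?thesis by linarith
qed

lemma mpoly_hg_union:
  fixes H :: "'a hg" and K :: "'b hg"
  assumes fH: "finite (hedges H)" and fK: "finite (hedges K)" and ne: "{} \<notin> hedges H"
  shows "mpoly (hedges (hg_union H K)) = mpoly (hedges H) * mpoly (hedges K)"
proof -
  have he: "hedges (hg_union H K) = (`) Inl ` hedges H \<union> (`) Inr ` hedges K"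
    unfolding hg_union_def hedges_def by simp
  have injl: "inj (Inl :: 'a \<Rightarrow> 'a + 'b)" by (rule injI) simp
  have injr: "inj (Inr :: 'b \<Rightarrow> 'a + 'b)" by (rule injI) simp
  have "mpoly ((`) Inl ` hedges H \<union> (`) Inr ` hedges K) = mpoly ((`) (Inl :: 'a \<Rightarrow> 'a + 'b) ` hedges H) * mpoly ((`) (Inr :: 'b \<Rightarrow> 'a + 'b) ` hedges K)"
  proof (rule mpoly_union)
    show "(`) Inl ` hedges H \<inter> (`) Inr ` hedges K = {}"
    proof (rule ccontr)
      assume "(`) Inl ` hedges H \<inter> (`) Inr ` hedges K \<noteq> {}"
      then obtain e f where ef: "e \<in> hedges H" "f \<in> hedges K" "Inl ` e = Inr ` f" by blast
      have "e \<noteq> {}" using ne ef(1) by auto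
      then obtain x where "x \<in> e" by blast
      then have "Inl x \<in> Inr ` f" using ef(3) by blast
      then show False by blast
    qed
  next
    show "finite ((`) Inl ` hedges H)" using fH by (rule finite_imageI)
  next
    show "finite ((`) Inr ` hedges K)" using fK by (rule finite_imageI)
  next
    fix e f assume "e \<in> (`) (Inl :: 'a \<Rightarrow> 'a + 'b) ` hedges H" "f \<in> (`) (Inr :: 'b \<Rightarrow> 'a + 'b) ` hedges K"
    then show "e \<inter> f = {}" by blast
  qed
  also have "\<dots> = mpoly (hedges H) * mpoly (hedges K)"
    by (simp only: mpoly_image[OF injl fH] mpoly_image[OF injr fK])
  finally show ?thesis unfolding he .
qed


definition good_hg :: "nat \<Rightarrow> 'a hg \<Rightarrow> bool" where
  "good_hg r H \<longleftrightarrow> finite (hverts H) \<and> (\<forall>e\<in>hedges H. e \<subseteq> hverts H \<and> card e = r)"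

lemma card_perms:
  assumes "finite A"
  shows "card {xs. set xs \<subseteq> A \<and> length xs = card A \<and> distinct xs} = fact (card A)"
proof -
  have "{xs. set xs \<subseteq> A \<and> length xs = card A \<and> distinct xs} = {xs. length xs = card A \<and> distinct xs \<and> set xs \<subseteq> A}"
    by blast
  moreover have "card {xs. length xs = card A \<and> distinct xs \<and> set xs \<subseteq> A} = \<Prod>{card A - card A + 1 .. card A}"
    by (rule card_lists_distinct_length_eq[OF assms]) simp
  ultimately show ?thesis by (simp add: fact_prod)
qed

lemma tensor_sum:
  fixes H :: "'a hg" and x :: "'a \<Rightarrow> complex"
  assumes good: "good_hg r H" and r: "r \<ge> 1" and i: "i \<in> hverts H"
  shows "(\<Sum>js \<in> {js. set js \<subseteq> hverts H \<and> length js = r - 1}. adj_tensor r H (i # js) * prod_list (map x js))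
       = (\<Sum>e \<in> {e \<in> hedges H. i \<in> e}. \<Prod>u \<in> e - {i}. x u)"
proof -
  define V where "V = hverts H"
  define E where "E = hedges H"
  define Ls where "Ls = {js. set js \<subseteq> V \<and> length js = r - 1}"
  define E' where "E' = {e \<in> E. i \<in> e}"
  define c :: complex where "c = 1 / of_nat (fact (r - 1))"
  have finV: "finite V" and Ecard: "\<And>e. e \<in> E \<Longrightarrow> e \<subseteq> V \<and> card e = r"
    using good unfolding good_hg_def V_def E_def by auto
  have finE: "finite E" using finV Ecard by (intro finite_subset[of E "Pow V"]) auto
  have finE': "finite E'" using finE unfolding E'_def by simp
  have finLs: "finite Ls" unfolding Ls_def using finV by (rule finite_lists_length_eq)
  have "(\<Sum>js \<in> Ls. adj_tensor r H (i # js) * prod_list (map x js))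
      = (\<Sum>js \<in> Ls. if set (i # js) \<in> E' then c * prod_list (map x js) else 0)"
    by (rule sum.cong) (auto simp: adj_tensor_def E'_def E_def c_def)
  also have "\<dots> = (\<Sum>js \<in> {js \<in> Ls. set (i # js) \<in> E'}. c * prod_list (map x js))"
    by (rule sum.inter_filter[symmetric]) (rule finLs)
  also have "\<dots> = (\<Sum>e \<in> E'. \<Sum>js \<in> {js. js \<in> {js \<in> Ls. set (i # js) \<in> E'} \<and> set (i # js) = e}. c * prod_list (map x js))"
    by (rule sum.group[symmetric]) (use finLs finE' in auto)
  also have "\<dots> = (\<Sum>e \<in> E'. \<Prod>u \<in> e - {i}. x u)"
  proof (rule sum.cong[OF refl])
    fix e assume e: "e \<in> E'"
    then have eE: "e \<subseteq> V" "card e = r" "i \<in> e" using Ecard unfolding E'_def by auto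
    have fe: "finite e" using eE(1) finV finite_subset by auto
    have ce: "card (e - {i}) = r - 1" using eE fe by simp
    let ?S = "{js. js \<in> {js \<in> Ls. set (i # js) \<in> E'} \<and> set (i # js) = e}"
    have S: "?S = {xs. set xs \<subseteq> e - {i} \<and> length xs = card (e - {i}) \<and> distinct xs}"
    proof (intro equalityI subsetI)
      fix js assume "js \<in> ?S"
      then have js: "set (i # js) = e" "length js = r - 1" unfolding Ls_def by auto
      then have "card (set (i # js)) = length (i # js)" using eE r by simp
      then have "distinct (i # js)" by (rule card_distinct)
      then show "js \<in> {xs. set xs \<subseteq> e - {i} \<and> length xs = card (e - {i}) \<and> distinct xs}"
        using js ce by auto
    next
      fix js assume "js \<in> {xs. set xs \<subseteq> e - {i} \<and> length xs = card (e - {i}) \<and> distinct xs}"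
      then have js: "set js \<subseteq> e - {i}" "length js = r - 1" "distinct js" using ce by auto
      have "card (set js) = card (e - {i})" using js ce by (simp add: distinct_card)
      then have "set js = e - {i}" using js(1) fe by (intro card_subset_eq) auto
      then have "set (i # js) = e" using eE(3) by auto
      then show "js \<in> ?S" using js e eE(1) unfolding Ls_def by auto
    qed
    have "(\<Sum>js \<in> ?S. c * prod_list (map x js)) = (\<Sum>js \<in> ?S. c * (\<Prod>u \<in> e - {i}. x u))"
    proof (rule sum.cong[OF refl])
      fix js assume "js \<in> ?S"
      then have "js \<in> {xs. set xs \<subseteq> e - {i} \<and> length xs = card (e - {i}) \<and> distinct xs}" using S by blast
      then have "distinct js" "set js \<subseteq> e - {i}" "length js = card (e - {i})" by auto
      moreover then have "card (set js) = card (e - {i})" by (simp add: distinct_card)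
      ultimately have "set js = e - {i}" using fe by (intro card_subset_eq) auto
      then show "c * prod_list (map x js) = c * (\<Prod>u \<in> e - {i}. x u)"
        using prod.distinct_set_conv_list[OF \<open>distinct js\<close>, of x] by simp
    qed
    also have "\<dots> = of_nat (card ?S) * c * (\<Prod>u \<in> e - {i}. x u)" by simp
    also have "card ?S = fact (r - 1)" unfolding S using card_perms[of "e - {i}"] fe ce by simp
    also have "of_nat (fact (r - 1)) * c = 1" unfolding c_def by simp
    finally show "(\<Sum>js \<in> ?S. c * prod_list (map x js)) = (\<Prod>u \<in> e - {i}. x u)" by simp
  qed
  finally show ?thesis unfolding V_def E_def Ls_def E'_def .
qed


lemma eig_bound:
  fixes H :: "'a hg" and y :: "'a \<Rightarrow> real"
  assumes good: "good_hg r H" and r: "r \<ge> 2" and ypos: "\<And>v. v \<in> hverts H \<Longrightarrow> y v > 0"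
    and rho: "rho \<ge> 0"
    and sup: "\<And>v. v \<in> hverts H \<Longrightarrow> (\<Sum>e \<in> {e \<in> hedges H. v \<in> e}. \<Prod>u \<in> e - {v}. y u) \<le> rho * y v ^ (r - 1)"
    and ev: "tensor_eigenvalue r H lam"
  shows "cmod lam \<le> rho"
proof -
  let ?V = "hverts H"
  obtain x where nz: "\<exists>i\<in>?V. x i \<noteq> 0"
    and eq0: "\<And>i. i \<in> ?V \<Longrightarrow> (\<Sum>js \<in> {js. set js \<subseteq> ?V \<and> length js = r - 1}. adj_tensor r H (i # js) * prod_list (map x js)) = lam * x i ^ (r - 1)"
    using ev unfolding tensor_eigenvalue_def by blast
  have eq: "(\<Sum>e \<in> {e \<in> hedges H. i \<in> e}. \<Prod>u \<in> e - {i}. x u) = lam * x i ^ (r - 1)" if "i \<in> ?V" for i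
    using eq0[OF that] tensor_sum[OF good _ that, of x] r by simp
  have finV: "finite ?V" using good unfolding good_hg_def by simp
  obtain i0 where i0: "i0 \<in> ?V" "x i0 \<noteq> 0" using nz by blast
  define f where "f v = cmod (x v) / y v" for v
  define t where "t = Max (f ` ?V)"
  have "t \<in> f ` ?V" unfolding t_def using finV i0 by (intro Max_in) auto
  then obtain i where i: "i \<in> ?V" "f i = t" by auto
  have fle: "f v \<le> t" if "v \<in> ?V" for v unfolding t_def using finV that by (intro Max_ge) auto
  have "f i0 > 0" unfolding f_def using i0 ypos[OF i0(1)] by simp
  then have tpos: "t > 0" using fle[OF i0(1)] by simp
  have xle: "cmod (x v) \<le> t * y v" if "v \<in> ?V" for v
    using fle[OF that] ypos[OF that] unfolding f_def by (simp add: divide_le_eq)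
  have xi: "cmod (x i) = t * y i" using i ypos[OF i(1)] unfolding f_def by (simp add: field_simps)
  have "cmod lam * (t * y i) ^ (r - 1) = cmod (lam * x i ^ (r - 1))" by (simp add: norm_mult norm_power xi)
  also have "\<dots> = cmod (\<Sum>e \<in> {e \<in> hedges H. i \<in> e}. \<Prod>u \<in> e - {i}. x u)" using eq[OF i(1)] by simp
  also have "\<dots> \<le> (\<Sum>e \<in> {e \<in> hedges H. i \<in> e}. cmod (\<Prod>u \<in> e - {i}. x u))" by (rule norm_sum)
  also have "\<dots> \<le> (\<Sum>e \<in> {e \<in> hedges H. i \<in> e}. t ^ (r - 1) * (\<Prod>u \<in> e - {i}. y u))"
  proof (rule sum_mono)
    fix e assume e: "e \<in> {e \<in> hedges H. i \<in> e}"
    then have eV: "e \<subseteq> ?V" "card e = r" "i \<in> e" using good unfolding good_hg_def by auto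
    then have fe: "finite e" using finV finite_subset by auto
    have ce: "card (e - {i}) = r - 1" using eV fe by simp
    have "cmod (\<Prod>u \<in> e - {i}. x u) = (\<Prod>u \<in> e - {i}. cmod (x u))" by (simp add: prod_norm)
    also have "\<dots> \<le> (\<Prod>u \<in> e - {i}. t * y u)"
      by (rule prod_mono) (use eV xle in auto)
    also have "\<dots> = t ^ (r - 1) * (\<Prod>u \<in> e - {i}. y u)" by (simp add: prod.distrib ce)
    finally show "cmod (\<Prod>u \<in> e - {i}. x u) \<le> t ^ (r - 1) * (\<Prod>u \<in> e - {i}. y u)" .
  qed
  also have "\<dots> = t ^ (r - 1) * (\<Sum>e \<in> {e \<in> hedges H. i \<in> e}. \<Prod>u \<in> e - {i}. y u)"
    by (simp add: sum_distrib_left)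
  also have "\<dots> \<le> t ^ (r - 1) * (rho * y i ^ (r - 1))"
    using sup[OF i(1)] tpos by (intro mult_left_mono) auto
  also have "\<dots> = rho * (t * y i) ^ (r - 1)" by (simp add: power_mult_distrib)
  finally have "cmod lam * (t * y i) ^ (r - 1) \<le> rho * (t * y i) ^ (r - 1)" .
  moreover have "(t * y i) ^ (r - 1) > 0" using tpos ypos[OF i(1)] by simp
  ultimately show ?thesis by simp
qed

lemma eig_exists:
  fixes H :: "'a hg" and y :: "'a \<Rightarrow> real"
  assumes good: "good_hg r H" and r: "r \<ge> 2" and nz: "\<exists>v\<in>hverts H. y v \<noteq> 0"
    and eq: "\<And>v. v \<in> hverts H \<Longrightarrow> (\<Sum>e \<in> {e \<in> hedges H. v \<in> e}. \<Prod>u \<in> e - {v}. y u) = rho * y v ^ (r - 1)"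
  shows "tensor_eigenvalue r H (complex_of_real rho)"
  unfolding tensor_eigenvalue_def
proof (intro exI[of _ "\<lambda>v. complex_of_real (y v)"] conjI ballI)
  show "\<exists>i\<in>hverts H. complex_of_real (y i) \<noteq> 0" using nz by simp
next
  fix i assume i: "i \<in> hverts H"
  have "(\<Sum>js \<in> {js. set js \<subseteq> hverts H \<and> length js = r - 1}. adj_tensor r H (i # js) * prod_list (map (\<lambda>v. complex_of_real (y v)) js))
      = (\<Sum>e \<in> {e \<in> hedges H. i \<in> e}. \<Prod>u \<in> e - {i}. complex_of_real (y u))"
    using tensor_sum[OF good _ i] r by simp
  also have "\<dots> = complex_of_real (\<Sum>e \<in> {e \<in> hedges H. i \<in> e}. \<Prod>u \<in> e - {i}. y u)" by simp
  also have "\<dots> = complex_of_real rho * complex_of_real (y i) ^ (r - 1)" using eq[OF i] by simp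
  finally show "(\<Sum>js \<in> {js. set js \<subseteq> hverts H \<and> length js = r - 1}. adj_tensor r H (i # js) * prod_list (map (\<lambda>v. complex_of_real (y v)) js))
      = complex_of_real rho * complex_of_real (y i) ^ (r - 1)" .
qed

lemma spectral_radius_eq:
  assumes "rho \<ge> 0" "tensor_eigenvalue r H (complex_of_real rho)"
    and "\<And>lam. tensor_eigenvalue r H lam \<Longrightarrow> cmod lam \<le> rho"
  shows "spectral_radius r H = rho"
  unfolding spectral_radius_def
proof (rule cSup_eq_maximum)
  show "rho \<in> {cmod lam |lam. tensor_eigenvalue r H lam}" using assms(1,2)
    by (intro CollectI exI[of _ "complex_of_real rho"]) simp
qed (use assms(3) in auto)

lemma hverts_union: "hverts (hg_union H K) = Inl ` hverts H \<union> Inr ` hverts K"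
  unfolding hg_union_def hverts_def by simp
lemma hedges_union: "hedges (hg_union H K) = (`) Inl ` hedges H \<union> (`) Inr ` hedges K"
  unfolding hg_union_def hedges_def by simp

lemma good_union:
  assumes "good_hg r H" "good_hg r K"
  shows "good_hg r (hg_union H K)"
  unfolding good_hg_def
proof (rule conjI)
  show "finite (hverts (hg_union H K))" using assms unfolding good_hg_def hverts_union by simp
next
  show "\<forall>e\<in>hedges (hg_union H K). e \<subseteq> hverts (hg_union H K) \<and> card e = r"
  proof
  fix e assume "e \<in> hedges (hg_union H K)"
  then consider (l) f where "f \<in> hedges H" "e = Inl ` f" | (rr) f where "f \<in> hedges K" "e = Inr ` f"
    unfolding hedges_union by blast
  then show "e \<subseteq> hverts (hg_union H K) \<and> card e = r"
  proof cases
    case l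
    then have "f \<subseteq> hverts H" "card f = r" using assms(1) unfolding good_hg_def by auto
    then show ?thesis using l unfolding hverts_union by (auto simp: card_image inj_on_def)
  next
    case rr
    then have "f \<subseteq> hverts K" "card f = r" using assms(2) unfolding good_hg_def by auto
    then show ?thesis using rr unfolding hverts_union by (auto simp: card_image inj_on_def)
  qed
  qed
qed

lemma edges_at_Inl:
  fixes H :: "'a hg" and K :: "'b hg" and z :: "'a + 'b \<Rightarrow> real"
  shows "(\<Sum>e \<in> {e \<in> hedges (hg_union H K). Inl v \<in> e}. \<Prod>u \<in> e - {Inl v}. z u)
       = (\<Sum>e \<in> {e \<in> hedges H. v \<in> e}. \<Prod>u \<in> e - {v}. z (Inl u))"
proof -
  have injI': "inj_on ((`) (Inl :: 'a \<Rightarrow> 'a + 'b)) A" for A by (rule inj_onI) (simp add: inj_image_eq_iff)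
  have S: "{e \<in> hedges (hg_union H K). Inl v \<in> e} = (`) Inl ` {e \<in> hedges H. v \<in> e}"
    unfolding hedges_union by auto
  have "(\<Sum>e \<in> (`) Inl ` {e \<in> hedges H. v \<in> e}. \<Prod>u \<in> e - {Inl v}. z u)
      = (\<Sum>e \<in> {e \<in> hedges H. v \<in> e}. \<Prod>u \<in> Inl ` e - {Inl v}. z u)"
    by (subst sum.reindex[OF injI']) simp
  also have "\<dots> = (\<Sum>e \<in> {e \<in> hedges H. v \<in> e}. \<Prod>u \<in> e - {v}. z (Inl u))"
  proof (rule sum.cong[OF refl])
    fix e
    have img: "Inl ` e - {Inl v} = Inl ` (e - {v})" by auto
    show "(\<Prod>u \<in> Inl ` e - {Inl v}. z u) = (\<Prod>u \<in> e - {v}. z (Inl u))"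
      unfolding img by (subst prod.reindex) (auto simp: inj_on_def)
  qed
  finally show ?thesis unfolding S .
qed

lemma edges_at_Inr:
  fixes H :: "'a hg" and K :: "'b hg" and z :: "'a + 'b \<Rightarrow> real"
  shows "(\<Sum>e \<in> {e \<in> hedges (hg_union H K). Inr v \<in> e}. \<Prod>u \<in> e - {Inr v}. z u)
       = (\<Sum>e \<in> {e \<in> hedges K. v \<in> e}. \<Prod>u \<in> e - {v}. z (Inr u))"
proof -
  have injI': "inj_on ((`) (Inr :: 'b \<Rightarrow> 'a + 'b)) A" for A by (rule inj_onI) (simp add: inj_image_eq_iff)
  have S: "{e \<in> hedges (hg_union H K). Inr v \<in> e} = (`) Inr ` {e \<in> hedges K. v \<in> e}"
    unfolding hedges_union by auto
  have "(\<Sum>e \<in> (`) Inr ` {e \<in> hedges K. v \<in> e}. \<Prod>u \<in> e - {Inr v}. z u)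
      = (\<Sum>e \<in> {e \<in> hedges K. v \<in> e}. \<Prod>u \<in> Inr ` e - {Inr v}. z u)"
    by (subst sum.reindex[OF injI']) simp
  also have "\<dots> = (\<Sum>e \<in> {e \<in> hedges K. v \<in> e}. \<Prod>u \<in> e - {v}. z (Inr u))"
  proof (rule sum.cong[OF refl])
    fix e
    have img: "Inr ` e - {Inr v} = Inr ` (e - {v})" by auto
    show "(\<Prod>u \<in> Inr ` e - {Inr v}. z u) = (\<Prod>u \<in> e - {v}. z (Inr u))"
      unfolding img by (subst prod.reindex) (auto simp: inj_on_def)
  qed
  finally show ?thesis unfolding S .
qed


lemma s_facts:
  assumes "r \<ge> 3"
  shows "root r 2 > 0" "root r 2 ^ r = 2" "root r 2 ^ 2 * root r 2 ^ (r - 2) = 2"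
proof -
  show "root r 2 > 0" using assms by simp
  show sr: "root r 2 ^ r = 2" using assms by simp
  have "root r 2 ^ 2 * root r 2 ^ (r - 2) = root r 2 ^ (2 + (r - 2))" by (rule power_add[symmetric])
  also have "2 + (r - 2) = r" using assms by simp
  finally show "root r 2 ^ 2 * root r 2 ^ (r - 2) = 2" using sr by simp
qed

lemma lp_edge_alt: "lp_edge r i = insert (i, 0) (insert (Suc i, 0) (Pair i ` {1..r-2}))"
  unfolding lp_edge_def by auto

lemma card_lp: "r \<ge> 3 \<Longrightarrow> card (lp_edge r i) = r"
proof -
  assume r: "r \<ge> 3"
  have c: "card (Pair i ` {1..r-2}) = r - 2" by (simp add: card_image inj_on_def)
  have "card (lp_edge r i) = Suc (Suc (card (Pair i ` {1..r-2})))"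
    unfolding lp_edge_alt by (simp add: card_insert_if image_iff)
  then show ?thesis using c r by simp
qed

lemma prod_Pair: "(\<Prod>u \<in> Pair i ` A. y u) = (\<Prod>j \<in> A. y (i, j))"
  by (subst prod.reindex) (auto simp: inj_on_def)

lemma prod_lp:
  "(\<Prod>u \<in> lp_edge r i. y u) = y (i, 0) * y (Suc i, 0) * (\<Prod>j \<in> {1..r-2}. y (i, j))"
  unfolding lp_edge_alt by (simp add: prod_Pair image_iff mult.assoc)

lemma P1_alt: "P1 r = insert (2, 0) (Pair 0 ` {1..r-1})" unfolding P1_def by auto
lemma P2_alt: "P2 r N = insert (N - 2, 0) (Pair N ` {1..r-1})" unfolding P2_def by auto

lemma prod_P1: "(\<Prod>u \<in> P1 r. y u) = y (2, 0) * (\<Prod>j \<in> {1..r-1}. y (0, j))"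
  unfolding P1_alt by (simp add: prod_Pair image_iff)
lemma prod_P2: "N \<noteq> N - 2 \<Longrightarrow> (\<Prod>u \<in> P2 r N. y u) = y (N - 2, 0) * (\<Prod>j \<in> {1..r-1}. y (N, j))"
  unfolding P2_alt by (simp add: prod_Pair image_iff)

lemma sum_remove_div:
  assumes "\<And>e. e \<in> S \<Longrightarrow> v \<in> e \<and> finite e" "(y v :: real) \<noteq> 0"
  shows "(\<Sum>e \<in> S. \<Prod>u \<in> e - {v}. y u) = (\<Sum>e \<in> S. \<Prod>u \<in> e. y u) / y v"
proof -
  have "(\<Prod>u \<in> e - {v}. y u) = (\<Prod>u \<in> e. y u) / y v" if "e \<in> S" for e
    using prod.remove[of e v y] assms(1)[OF that] assms(2) by simp
  then show ?thesis by (simp add: sum_divide_distrib)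
qed

definition yP :: "nat \<Rightarrow> nat \<times> nat \<Rightarrow> real" where
  "yP r = (\<lambda>(x, b). if b = 0 then root r 2 else 1)"

lemma hverts_lp: "hverts (loose_path r a) = \<Union>(lp_edge r ` {1..a})"
  unfolding loose_path_def hverts_def loose_path_edges_def by simp
lemma hedges_lp: "hedges (loose_path r a) = lp_edge r ` {1..a}"
  unfolding loose_path_def hedges_def loose_path_edges_def by simp

lemma good_lp:
  assumes "r \<ge> 3" shows "good_hg r (loose_path r a)"
proof -
  have "finite (\<Union>(lp_edge r ` {1..a}))" by (auto simp: lp_edge_alt)
  moreover have "\<forall>e \<in> lp_edge r ` {1..a}. e \<subseteq> \<Union>(lp_edge r ` {1..a}) \<and> card e = r"
    using assms by (auto simp: card_lp)
  ultimately show ?thesis unfolding good_hg_def hverts_lp hedges_lp by blast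
qed

lemma lp_bound:
  assumes r: "r \<ge> 3" and v: "v \<in> hverts (loose_path r a)"
  shows "(\<Sum>e \<in> {e \<in> hedges (loose_path r a). v \<in> e}. \<Prod>u \<in> e - {v}. yP r u) \<le> root r 2 ^ 2 * yP r v ^ (r - 1)"
proof -
  let ?s = "root r 2"
  note sf = s_facts[OF r]
  let ?S = "{e \<in> hedges (loose_path r a). v \<in> e}"
  obtain x b where xb: "v = (x, b)" by (cases v)
  have ypos: "yP r v > 0" using sf unfolding yP_def xb by auto
  have fin: "finite e" if "e \<in> ?S" for e using that unfolding hedges_lp lp_edge_alt by auto
  have pi: "(\<Prod>u \<in> e. yP r u) = ?s ^ 2" if e: "e \<in> ?S" for e
  proof -
    obtain i where "e = lp_edge r i" using e by (auto simp: hedges_lp)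
    then show ?thesis by (simp add: prod_lp yP_def power2_eq_square)
  qed
  have "(\<Sum>e \<in> ?S. \<Prod>u \<in> e - {v}. yP r u) = (\<Sum>e \<in> ?S. \<Prod>u \<in> e. yP r u) / yP r v"
    by (rule sum_remove_div) (use fin ypos in auto)
  also have "(\<Sum>e \<in> ?S. \<Prod>u \<in> e. yP r u) = real (card ?S) * ?s ^ 2" using pi by simp
  finally have eq: "(\<Sum>e \<in> ?S. \<Prod>u \<in> e - {v}. yP r u) = real (card ?S) * ?s ^ 2 / yP r v" .
  have "real (card ?S) * ?s ^ 2 \<le> ?s ^ 2 * yP r v ^ r"
  proof (cases "b = 0")
    case True
    have "?S \<subseteq> lp_edge r ` {x - 1, x}" unfolding hedges_lp xb True by (auto simp: mem_lp)
    then have "card ?S \<le> card (lp_edge r ` {x - 1, x})" by (intro card_mono) auto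
    also have "\<dots> \<le> card {x - 1, x}" by (rule card_image_le) simp
    also have "\<dots> \<le> 2" by (simp add: card_insert_if)
    finally have "real (card ?S) \<le> 2" by simp
    moreover have "yP r v ^ r = 2" unfolding yP_def xb using True sf by simp
    ultimately show ?thesis using sf by (simp add: mult.commute mult_right_mono)
  next
    case False
    have "?S \<subseteq> {lp_edge r x}" unfolding hedges_lp xb using False by (auto simp: mem_lp)
    then have "card ?S \<le> card {lp_edge r x}" by (intro card_mono) auto
    then have "real (card ?S) \<le> 1" by simp
    moreover have "yP r v ^ r = 1" unfolding yP_def xb using False by simp
    ultimately show ?thesis using sf by (simp add: mult.commute mult_right_mono)
  qed
  then have "real (card ?S) * ?s ^ 2 / yP r v \<le> ?s ^ 2 * yP r v ^ r / yP r v"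
    using ypos by (intro divide_right_mono) auto
  also have "?s ^ 2 * yP r v ^ r / yP r v = ?s ^ 2 * yP r v ^ (r - 1)"
  proof -
    have "yP r v ^ r = yP r v ^ (r - 1) * yP r v" using r by (metis Suc_diff_le le_trans numeral_le_iff one_le_numeral power_Suc2 diff_Suc_1 Suc_le_eq le_less_trans zero_less_Suc not_less_eq_eq linorder_not_le less_numeral_extra(1) one_less_numeral_iff semiring_norm(76) le_add_diff_inverse2 plus_1_eq_Suc)
    then show ?thesis using ypos by simp
  qed
  finally show ?thesis using eq by simp
qed


definition yW :: "nat \<Rightarrow> nat \<Rightarrow> nat \<times> nat \<Rightarrow> real" where
  "yW r L = (\<lambda>(x, b). if b = 0 then (if 2 \<le> x \<and> x \<le> L then root r 2 else 1 / root r 2)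
                      else (if 2 \<le> x \<and> x \<le> L - 1 then 1 else 1 / root r 2))"

lemma hverts_W: "hverts (W_hg r N) = \<Union>(W_edges r N)"
  unfolding W_hg_def hverts_def by simp
lemma hedges_W: "hedges (W_hg r N) = W_edges r N"
  unfolding W_hg_def hedges_def by simp

lemma card_P1: "r \<ge> 3 \<Longrightarrow> card (P1 r) = r"
  unfolding P1_alt by (simp add: card_insert_if image_iff card_image inj_on_def)
lemma card_P2: "r \<ge> 3 \<Longrightarrow> N \<noteq> N - 2 \<Longrightarrow> card (P2 r N) = r"
  unfolding P2_alt by (simp add: card_insert_if image_iff card_image inj_on_def)

lemma good_W:
  assumes "r \<ge> 3" "N \<ge> 5" shows "good_hg r (W_hg r N)"
proof -
  have fin: "finite e" if "e \<in> W_edges r N" for e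
    using that unfolding W_edges_alt by (auto simp: lp_edge_alt P1_alt P2_alt)
  have "finite (W_edges r N)" unfolding W_edges_alt by simp
  then have "finite (\<Union>(W_edges r N))" using fin by blast
  moreover have "\<forall>e \<in> W_edges r N. e \<subseteq> \<Union>(W_edges r N) \<and> card e = r"
    using assms unfolding W_edges_alt by (auto simp: card_lp card_P1 card_P2)
  ultimately show ?thesis unfolding good_hg_def hverts_W hedges_W by blast
qed

lemma sum_Ev_W:
  assumes r: "r \<ge> 3" and L: "L \<ge> 3" and N: "N = L + 2"
  shows "(\<Sum>e \<in> {e \<in> W_edges r N. v \<in> e}. g e)
       = (\<Sum>i \<in> {i \<in> {1..L}. v \<in> lp_edge r i}. g (lp_edge r i))
         + (if v \<in> P1 r then g (P1 r) else 0) + (if v \<in> P2 r N then g (P2 r N) else 0)"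
proof -
  let ?I = "{i \<in> {1..L}. v \<in> lp_edge r i}"
  let ?B = "{e \<in> {P1 r, P2 r N}. v \<in> e}"
  have WL: "W_edges r N = lp_edge r ` {1..L} \<union> {P1 r, P2 r N}" using N unfolding W_edges_alt by simp
  have S: "{e \<in> W_edges r N. v \<in> e} = lp_edge r ` ?I \<union> ?B" unfolding WL by auto
  have P2n: "P2 r N \<notin> lp_edge r ` {1..L}"
  proof
    assume "P2 r N \<in> lp_edge r ` {1..L}"
    moreover have "(N, 1) \<in> P2 r N" using r unfolding P2_def by auto
    ultimately show False using N by (auto simp: mem_lp)
  qed
  have disj: "lp_edge r ` ?I \<inter> ?B = {}" using P1_notin[OF r] P2n by blast
  have P12: "P1 r \<noteq> P2 r N"
  proof
    assume "P1 r = P2 r N"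
    moreover have "(0, 1) \<in> P1 r" using r unfolding P1_def by auto
    ultimately show False using N unfolding P2_def by auto
  qed
  have "(\<Sum>e \<in> {e \<in> W_edges r N. v \<in> e}. g e) = (\<Sum>e \<in> lp_edge r ` ?I. g e) + (\<Sum>e \<in> ?B. g e)"
    unfolding S by (rule sum.union_disjoint) (use disj in auto)
  also have "(\<Sum>e \<in> lp_edge r ` ?I. g e) = (\<Sum>i \<in> ?I. g (lp_edge r i))"
    by (subst sum.reindex) (auto intro: inj_on_subset[OF lp_inj])
  also have "(\<Sum>e \<in> ?B. g e) = (if v \<in> P1 r then g (P1 r) else 0) + (if v \<in> P2 r N then g (P2 r N) else 0)"
  proof -
    have B: "?B = (if v \<in> P1 r then {P1 r} else {}) \<union> (if v \<in> P2 r N then {P2 r N} else {})" by auto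
    show ?thesis unfolding B using P12 by (cases "v \<in> P1 r"; cases "v \<in> P2 r N") (simp_all add: add.commute)
  qed
  finally show ?thesis by (simp add: add.assoc)
qed

lemma W_key:
  assumes r: "r \<ge> 3" and L: "L \<ge> 3" and N: "N = L + 2" and v: "v \<in> \<Union>(W_edges r N)"
  shows "(\<Sum>e \<in> {e \<in> W_edges r N. v \<in> e}. \<Prod>u \<in> e. yW r L u) = root r 2 ^ 2 * yW r L v ^ r"
proof -
  let ?s = "root r 2"
  let ?h = "(1 / ?s) ^ (r - 2)"
  let ?y = "yW r L"
  note sf = s_facts[OF r]
  have h: "?h = ?s ^ 2 / 2"
  proof -
    have "?h = 1 / ?s ^ (r - 2)" by (simp add: power_one_over)
    also have "?s ^ (r - 2) = 2 / ?s ^ 2" using sf by (simp add: field_simps)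
    finally show ?thesis by simp
  qed
  have h1: "(1 / ?s) ^ (r - 1) * ?s = ?h"
  proof -
    have "r - 1 = Suc (r - 2)" using r by simp
    then show ?thesis using sf by (simp add: field_simps)
  qed
  have sr: "?s ^ r = 2" using sf by simp
  have isr: "(1 / ?s) ^ r = 1 / 2" using sf by (simp add: power_one_over)
  have pi_lp: "(\<Prod>u \<in> lp_edge r i. ?y u) = (if i = 1 \<or> i = L then ?h else ?s ^ 2)" if i: "i \<in> {1..L}" for i
  proof -
    have c: "(\<Prod>j \<in> {1..r-2}. ?y (i, j)) = (if 2 \<le> i \<and> i \<le> L - 1 then 1 else 1 / ?s) ^ (r - 2)"
      unfolding yW_def by simp
    show ?thesis unfolding prod_lp c using i L r by (auto simp: yW_def power2_eq_square)
  qed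
  have pi_P1: "(\<Prod>u \<in> P1 r. ?y u) = ?h"
  proof -
    have "(\<Prod>j \<in> {1..r-1}. ?y (0, j)) = (1 / ?s) ^ (r - 1)" unfolding yW_def by simp
    then show ?thesis unfolding prod_P1 using L h1 by (simp add: yW_def mult.commute)
  qed
  have pi_P2: "(\<Prod>u \<in> P2 r N. ?y u) = ?h"
  proof -
    have "(\<Prod>j \<in> {1..r-1}. ?y (N, j)) = (1 / ?s) ^ (r - 1)" unfolding yW_def using N by simp
    moreover have "(\<Prod>u \<in> P2 r N. ?y u) = ?y (N - 2, 0) * (\<Prod>j \<in> {1..r-1}. ?y (N, j))"
      by (rule prod_P2) (use N in simp)
    ultimately show ?thesis using N L h1 by (simp add: yW_def mult.commute)
  qed
  obtain x b where xb: "v = (x, b)" by (cases v)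
  have dec: "(\<Sum>e \<in> {e \<in> W_edges r N. v \<in> e}. \<Prod>u \<in> e. ?y u)
     = (\<Sum>i \<in> {i \<in> {1..L}. v \<in> lp_edge r i}. \<Prod>u \<in> lp_edge r i. ?y u)
       + (if v \<in> P1 r then ?h else 0) + (if v \<in> P2 r N then ?h else 0)"
    using sum_Ev_W[OF r L N, where v = v and g = "\<lambda>e. \<Prod>u \<in> e. ?y u"] pi_P1 pi_P2 by simp
  have memP1: "v \<in> P1 r \<longleftrightarrow> (x = 2 \<and> b = 0) \<or> (x = 0 \<and> 1 \<le> b \<and> b \<le> r - 1)"
    unfolding xb P1_def by auto
  have memP2: "v \<in> P2 r N \<longleftrightarrow> (x = L \<and> b = 0) \<or> (x = N \<and> 1 \<le> b \<and> b \<le> r - 1)"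
    unfolding xb P2_def using N by auto
  have vcases: "(b = 0 \<and> 1 \<le> x \<and> x \<le> Suc L) \<or> (b \<noteq> 0 \<and> 1 \<le> x \<and> x \<le> L \<and> b \<le> r - 2)
      \<or> (b \<noteq> 0 \<and> x = 0 \<and> b \<le> r - 1) \<or> (b \<noteq> 0 \<and> x = N \<and> b \<le> r - 1)"
    using v N L unfolding W_edges_alt xb by (auto simp: mem_lp P1_def P2_def)
  have hv: "?s ^ 2 * (1 / ?s) ^ r = ?h" unfolding isr h by simp
  have sv: "?s ^ 2 * ?s ^ r = ?s ^ 2 + ?s ^ 2" unfolding sr by simp
  have hh: "?h + ?h = ?s ^ 2" unfolding h by simp
  show ?thesis
  proof (cases "b = 0")
    case b0: True
    then have x: "1 \<le> x" "x \<le> Suc L" using vcases by auto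
    show ?thesis
    proof (cases "x = 1")
      case True
      have I: "{i \<in> {1..L}. v \<in> lp_edge r i} = {1}" using L unfolding xb True b0 by (auto simp: mem_lp)
      have yv: "?y v = 1 / ?s" unfolding xb True b0 yW_def by simp
      have "(\<Sum>i \<in> {1}. \<Prod>u \<in> lp_edge r i. ?y u) = ?h" using pi_lp[of 1] L by simp
      then show ?thesis unfolding dec I memP1 memP2 yv hv using True b0 L by simp
    next
      case x1: False
      show ?thesis
      proof (cases "x = Suc L")
        case True
        have I: "{i \<in> {1..L}. v \<in> lp_edge r i} = {L}" using L unfolding xb True b0 by (auto simp: mem_lp)
        have yv: "?y v = 1 / ?s" unfolding xb True b0 yW_def by simp
        have "(\<Sum>i \<in> {L}. \<Prod>u \<in> lp_edge r i. ?y u) = ?h" using pi_lp[of L] L by simp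
        then show ?thesis unfolding dec I memP1 memP2 yv hv using True b0 L N by simp
      next
        case False
        then have x2: "2 \<le> x" "x \<le> L" using x x1 by auto
        have I: "{i \<in> {1..L}. v \<in> lp_edge r i} = {x - 1, x}" using x2 unfolding xb b0 by (auto simp: mem_lp)
        have yv: "?y v = ?s" unfolding xb b0 yW_def using x2 by simp
        have "(\<Sum>i \<in> {x - 1, x}. \<Prod>u \<in> lp_edge r i. ?y u) = (\<Prod>u \<in> lp_edge r (x - 1). ?y u) + (\<Prod>u \<in> lp_edge r x. ?y u)"
          using x2 by simp
        also have "\<dots> = (if x - 1 = 1 then ?h else ?s ^ 2) + (if x = L then ?h else ?s ^ 2)"
        proof -
          have m: "x - 1 \<in> {1..L}" "x \<in> {1..L}" using x2 by auto
          have "x - 1 \<noteq> L" using x2 by auto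
          then show ?thesis using pi_lp[OF m(1)] pi_lp[OF m(2)] x2 by auto
        qed
        finally have S: "(\<Sum>i \<in> {x - 1, x}. \<Prod>u \<in> lp_edge r i. ?y u) = (if x - 1 = 1 then ?h else ?s ^ 2) + (if x = L then ?h else ?s ^ 2)" .
        have P1e: "v \<in> P1 r \<longleftrightarrow> x = 2" unfolding memP1 using b0 by simp
        have P2e: "v \<in> P2 r N \<longleftrightarrow> x = L" unfolding memP2 using b0 by simp
        show ?thesis unfolding dec I S P1e P2e yv sv
        proof -
          consider "x = 2" | "x = L" | "x \<noteq> 2 \<and> x \<noteq> L" by blast
          then show "(if x - 1 = 1 then ?h else ?s ^ 2) + (if x = L then ?h else ?s ^ 2) + (if x = 2 then ?h else 0) + (if x = L then ?h else 0) = ?s ^ 2 + ?s ^ 2"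
          proof cases
            case 1 then show ?thesis using L hh by (simp add: algebra_simps)
          next
            case 2 then show ?thesis using L hh by (simp add: algebra_simps)
          next
            case 3 then have "x - 1 \<noteq> 1" using x2 3 by linarith
            then show ?thesis using 3 by simp
          qed
        qed
      qed
    qed
  next
    case bn: False
    show ?thesis
    proof (cases "x = 0")
      case True
      have I: "{i \<in> {1..L}. v \<in> lp_edge r i} = {}" unfolding xb True by (auto simp: mem_lp)
      have yv: "?y v = 1 / ?s" unfolding xb True yW_def using bn by simp
      have P1e: "v \<in> P1 r" "\<not> v \<in> P2 r N" unfolding memP1 memP2 using True bn vcases N by auto
      show ?thesis unfolding dec I yv hv using P1e by simp
    next
      case x0: False
      show ?thesis
      proof (cases "x = N")
        case True
        have I: "{i \<in> {1..L}. v \<in> lp_edge r i} = {}" unfolding xb True using N by (auto simp: mem_lp)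
        have yv: "?y v = 1 / ?s" unfolding xb True yW_def using bn N by simp
        have P2e: "\<not> v \<in> P1 r" "v \<in> P2 r N" unfolding memP1 memP2 using True bn vcases N by auto
        show ?thesis unfolding dec I yv hv using P2e by simp
      next
        case False
        then have xr: "1 \<le> x" "x \<le> L" "b \<le> r - 2" using vcases bn x0 by auto
        have I: "{i \<in> {1..L}. v \<in> lp_edge r i} = {x}" unfolding xb using xr bn by (auto simp: mem_lp)
        have notP: "\<not> v \<in> P1 r" "\<not> v \<in> P2 r N" unfolding memP1 memP2 using bn x0 False by auto
        have S: "(\<Sum>i \<in> {x}. \<Prod>u \<in> lp_edge r i. ?y u) = (if x = 1 \<or> x = L then ?h else ?s ^ 2)"
          using pi_lp[of x] xr by simp
        show ?thesis
        proof (cases "x = 1 \<or> x = L")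
          case True
          then have yv: "?y v = 1 / ?s" unfolding xb yW_def using bn L by auto
          show ?thesis unfolding dec I S yv hv using notP True by simp
        next
          case False
          then have yv: "?y v = 1" unfolding xb yW_def using bn xr by auto
          show ?thesis unfolding dec I S yv using notP False by simp
        qed
      qed
    qed
  qed
qed

lemma W_eigen:
  assumes r: "r \<ge> 3" and N: "N \<ge> 5" and v: "v \<in> hverts (W_hg r N)"
  shows "(\<Sum>e \<in> {e \<in> hedges (W_hg r N). v \<in> e}. \<Prod>u \<in> e - {v}. yW r (N - 2) u) = root r 2 ^ 2 * yW r (N - 2) v ^ (r - 1)"
proof -
  let ?y = "yW r (N - 2)"
  have ypos: "?y v > 0" using r unfolding yW_def by (auto split: prod.splits)
  have fin: "finite e" if "e \<in> W_edges r N" for e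
    using that unfolding W_edges_alt by (auto simp: lp_edge_alt P1_alt P2_alt)
  have "(\<Sum>e \<in> {e \<in> W_edges r N. v \<in> e}. \<Prod>u \<in> e - {v}. ?y u) = (\<Sum>e \<in> {e \<in> W_edges r N. v \<in> e}. \<Prod>u \<in> e. ?y u) / ?y v"
    by (rule sum_remove_div) (use fin ypos in auto)
  also have "\<dots> = root r 2 ^ 2 * ?y v ^ r / ?y v"
    using W_key[OF r _ _ v[unfolded hverts_W], of "N - 2"] N by simp
  also have "\<dots> = root r 2 ^ 2 * ?y v ^ (r - 1)"
  proof -
    have "?y v ^ r = ?y v ^ (r - 1) * ?y v" using r by (metis power_minus_mult less_le_trans zero_less_numeral numeral_le_iff semiring_norm(69) le_numeral_extra(4) not_numeral_le_zero not_less linorder_not_le)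
    then show ?thesis using ypos by simp
  qed
  finally show ?thesis unfolding hedges_W .
qed


lemma spec_union:
  assumes a: "a \<ge> 1" and N: "N \<ge> 5" and r: "r \<ge> 3"
  shows "spectral_radius r (hg_union (loose_path r a) (W_hg r N)) = root r 2 ^ 2"
proof -
  let ?H = "hg_union (loose_path r a) (W_hg r N)"
  let ?s = "root r 2"
  let ?yW = "yW r (N - 2)"
  note sf = s_facts[OF r]
  have good: "good_hg r ?H" by (rule good_union[OF good_lp[OF r] good_W[OF r N]])
  have r2: "r \<ge> 2" using r by simp
  have yWpos: "?yW w > 0" for w using r unfolding yW_def by (auto split: prod.splits)
  have yPpos: "yP r p > 0" for p using r unfolding yP_def by (auto split: prod.splits)
  define ye :: "(nat \<times> nat) + (nat \<times> nat) \<Rightarrow> real" where "ye = (\<lambda>z. case z of Inl p \<Rightarrow> (0::real) | Inr w \<Rightarrow> ?yW w)"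
  define yb :: "(nat \<times> nat) + (nat \<times> nat) \<Rightarrow> real" where "yb = (\<lambda>z. case z of Inl p \<Rightarrow> yP r p | Inr w \<Rightarrow> ?yW w)"
  have w1: "(1, 0) \<in> hverts (W_hg r N)"
  proof -
    have "(1, 0) \<in> lp_edge r 1" by (simp add: mem_lp)
    moreover have "lp_edge r 1 \<in> W_edges r N" using N unfolding W_edges_alt by auto
    ultimately show ?thesis unfolding hverts_W by blast
  qed
  have ev: "tensor_eigenvalue r ?H (complex_of_real (?s ^ 2))"
  proof (rule eig_exists[OF good r2])
    show "\<exists>v\<in>hverts ?H. ye v \<noteq> 0"
      using w1 yWpos[of "(1, 0)"] unfolding hverts_union ye_def by (intro bexI[of _ "Inr (1, 0)"]) auto
  next
    fix v assume v: "v \<in> hverts ?H"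
    then consider (l) p where "v = Inl p" "p \<in> hverts (loose_path r a)" | (rr) w where "v = Inr w" "w \<in> hverts (W_hg r N)"
      unfolding hverts_union by blast
    then show "(\<Sum>e \<in> {e \<in> hedges ?H. v \<in> e}. \<Prod>u \<in> e - {v}. ye u) = ?s ^ 2 * ye v ^ (r - 1)"
    proof cases
      case l
      have "(\<Sum>e \<in> {e \<in> hedges ?H. v \<in> e}. \<Prod>u \<in> e - {v}. ye u)
          = (\<Sum>e \<in> {e \<in> hedges (loose_path r a). p \<in> e}. \<Prod>u \<in> e - {p}. ye (Inl u))"
        unfolding l(1) by (rule edges_at_Inl)
      also have "\<dots> = 0"
      proof (rule sum.neutral, rule ballI)
        fix e assume e: "e \<in> {e \<in> hedges (loose_path r a). p \<in> e}"
        then obtain i where ei: "e = lp_edge r i" by (auto simp: hedges_lp)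
        have "(Suc i, 0) \<in> e" "(i, 0) \<in> e" unfolding ei by (simp_all add: mem_lp)
        then obtain q where q: "q \<in> e - {p}" by (metis Diff_iff Pair_inject n_not_Suc_n singletonD)
        have "finite e" unfolding ei lp_edge_alt by simp
        then show "(\<Prod>u \<in> e - {p}. ye (Inl u)) = 0"
        proof (rule prod_zero[OF finite_Diff])
          show "\<exists>u \<in> e - {p}. ye (Inl u) = 0" using q unfolding ye_def by (intro bexI[of _ q]) simp_all
        qed
      qed
      also have "\<dots> = ?s ^ 2 * ye v ^ (r - 1)" unfolding l(1) ye_def using r by simp
      finally show ?thesis .
    next
      case rr
      have "(\<Sum>e \<in> {e \<in> hedges ?H. v \<in> e}. \<Prod>u \<in> e - {v}. ye u)
          = (\<Sum>e \<in> {e \<in> hedges (W_hg r N). w \<in> e}. \<Prod>u \<in> e - {w}. ye (Inr u))"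
        unfolding rr(1) by (rule edges_at_Inr)
      also have "\<dots> = (\<Sum>e \<in> {e \<in> hedges (W_hg r N). w \<in> e}. \<Prod>u \<in> e - {w}. ?yW u)"
        unfolding ye_def by simp
      also have "\<dots> = ?s ^ 2 * ?yW w ^ (r - 1)" by (rule W_eigen[OF r N rr(2)])
      finally show ?thesis unfolding rr(1) ye_def by simp
    qed
  qed
  have bound: "cmod lam \<le> ?s ^ 2" if lam: "tensor_eigenvalue r ?H lam" for lam
  proof (rule eig_bound[OF good r2 _ _ _ lam])
    fix v assume "v \<in> hverts ?H"
    show "yb v > 0" unfolding yb_def using yWpos yPpos by (auto split: sum.splits)
  next
    show "?s ^ 2 \<ge> 0" by simp
  next
    fix v assume v: "v \<in> hverts ?H"
    then consider (l) p where "v = Inl p" "p \<in> hverts (loose_path r a)" | (rr) w where "v = Inr w" "w \<in> hverts (W_hg r N)"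
      unfolding hverts_union by blast
    then show "(\<Sum>e \<in> {e \<in> hedges ?H. v \<in> e}. \<Prod>u \<in> e - {v}. yb u) \<le> ?s ^ 2 * yb v ^ (r - 1)"
    proof cases
      case l
      have "(\<Sum>e \<in> {e \<in> hedges ?H. v \<in> e}. \<Prod>u \<in> e - {v}. yb u)
          = (\<Sum>e \<in> {e \<in> hedges (loose_path r a). p \<in> e}. \<Prod>u \<in> e - {p}. yb (Inl u))"
        unfolding l(1) by (rule edges_at_Inl)
      also have "\<dots> = (\<Sum>e \<in> {e \<in> hedges (loose_path r a). p \<in> e}. \<Prod>u \<in> e - {p}. yP r u)"
        unfolding yb_def by simp
      also have "\<dots> \<le> ?s ^ 2 * yP r p ^ (r - 1)" by (rule lp_bound[OF r l(2)])
      finally show ?thesis unfolding l(1) yb_def by simp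
    next
      case rr
      have "(\<Sum>e \<in> {e \<in> hedges ?H. v \<in> e}. \<Prod>u \<in> e - {v}. yb u)
          = (\<Sum>e \<in> {e \<in> hedges (W_hg r N). w \<in> e}. \<Prod>u \<in> e - {w}. yb (Inr u))"
        unfolding rr(1) by (rule edges_at_Inr)
      also have "\<dots> = (\<Sum>e \<in> {e \<in> hedges (W_hg r N). w \<in> e}. \<Prod>u \<in> e - {w}. ?yW u)"
        unfolding yb_def by simp
      also have "\<dots> = ?s ^ 2 * ?yW w ^ (r - 1)" by (rule W_eigen[OF r N rr(2)])
      finally show ?thesis unfolding rr(1) yb_def by simp
    qed
  qed
  have "complex_of_real (?s ^ 2) = complex_of_real (?s ^ 2)" ..
  show ?thesis by (rule spectral_radius_eq) (use ev bound in auto)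
qed

lemma num_matchings_eq:
  assumes "finite (hedges H)" "finite (hedges K)" "mpoly (hedges H) = mpoly (hedges K)"
  shows "num_matchings H = num_matchings K"
proof
  fix k
  have "int (num_matchings H k) = coeff (mpoly (hedges H)) k" unfolding num_matchings_def using coeff_mpoly[OF assms(1)] by simp
  also have "\<dots> = coeff (mpoly (hedges K)) k" using assms(3) by simp
  also have "\<dots> = int (num_matchings K k)" unfolding num_matchings_def using coeff_mpoly[OF assms(2)] by simp
  finally show "num_matchings H k = num_matchings K k" by simp
qed

lemma matching_energy_eq:
  assumes "card (hverts H) = card (hverts K)" "num_matchings H = num_matchings K"
  shows "matching_energy r H = matching_energy r K"
  unfolding matching_energy_def matching_poly_def assms ..

lemma finite_hedges_lp: "finite (hedges (loose_path r a))" unfolding hedges_lp by simp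
lemma finite_hedges_W: "finite (hedges (W_hg r N))" unfolding hedges_W W_edges_alt by simp

lemma mpoly_U:
  assumes "a \<ge> 1" "N \<ge> 5" "r \<ge> 3"
  shows "mpoly (hedges (hg_union (loose_path r a) (W_hg r N))) = J (Suc a) * ((1 + 4 * monom 1 1) * J (N - 3))"
proof -
  have ne: "{} \<notin> hedges (loose_path r a)" unfolding hedges_lp lp_edge_alt by auto
  have "mpoly (hedges (loose_path r a)) = J (Suc a)"
    unfolding hedges_lp using mpoly_path[of r 0 a] by simp
  moreover have "mpoly (hedges (W_hg r N)) = (1 + 4 * monom 1 1) * J (N - 3)"
    unfolding hedges_W by (rule mpoly_W) (use assms in auto)
  ultimately show ?thesis using mpoly_hg_union[OF finite_hedges_lp finite_hedges_W ne] by simp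
qed

lemma card_U:
  assumes "a \<ge> 1" "N \<ge> 5" "r \<ge> 3"
  shows "card (hverts (hg_union (loose_path r a) (W_hg r N))) = Suc a + a * (r - 2) + (Suc (N - 2) + (N - 2) * (r - 2) + 2 * (r - 1))"
proof -
  have f1: "finite (hverts (loose_path r a))" using good_lp[OF assms(3)] unfolding good_hg_def by simp
  have f2: "finite (hverts (W_hg r N))" using good_W[OF assms(3,2)] unfolding good_hg_def by simp
  have "card (hverts (hg_union (loose_path r a) (W_hg r N))) = card ((Inl :: nat \<times> nat \<Rightarrow> (nat \<times> nat) + (nat \<times> nat)) ` hverts (loose_path r a)) + card ((Inr :: nat \<times> nat \<Rightarrow> (nat \<times> nat) + (nat \<times> nat)) ` hverts (W_hg r N))"
    unfolding hverts_union by (rule card_Un_disjoint) (use f1 f2 in auto)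
  also have "\<dots> = card (hverts (loose_path r a)) + card (hverts (W_hg r N))"
    by (simp add: card_image)
  finally show ?thesis unfolding hverts_lp hverts_W using card_path_verts[OF assms(1)] card_W_verts[OF assms(2,3)] by simp
qed

theorem theorem8:
  fixes m n r :: nat
  assumes "m \<ge> 6" and "n \<ge> 6" and "r \<ge> 3"
  shows "spectral_radius r (hg_union (loose_path r (m - 5)) (W_hg r (n - 1)))
           = spectral_radius r (hg_union (loose_path r (n - 5)) (W_hg r (m - 1)))
       \<and> matching_energy r (hg_union (loose_path r (m - 5)) (W_hg r (n - 1)))
           = matching_energy r (hg_union (loose_path r (n - 5)) (W_hg r (m - 1)))"
proof
  show "spectral_radius r (hg_union (loose_path r (m - 5)) (W_hg r (n - 1)))
           = spectral_radius r (hg_union (loose_path r (n - 5)) (W_hg r (m - 1)))"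
    using spec_union[of "m - 5" "n - 1" r] spec_union[of "n - 5" "m - 1" r] assms by simp
next
  let ?U1 = "hg_union (loose_path r (m - 5)) (W_hg r (n - 1))"
  let ?U2 = "hg_union (loose_path r (n - 5)) (W_hg r (m - 1))"
  have fU: "finite (hedges (hg_union (loose_path r a) (W_hg r N)))" for a N
    unfolding hedges_union using finite_hedges_lp finite_hedges_W by simp
  have m1: "mpoly (hedges ?U1) = J (Suc (m - 5)) * ((1 + 4 * monom 1 1) * J (n - 1 - 3))"
    by (rule mpoly_U) (use assms in auto)
  have m2: "mpoly (hedges ?U2) = J (Suc (n - 5)) * ((1 + 4 * monom 1 1) * J (m - 1 - 3))"
    by (rule mpoly_U) (use assms in auto)
  have e1: "Suc (m - 5) = m - 1 - 3" "Suc (n - 5) = n - 1 - 3" using assms by auto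
  have "mpoly (hedges ?U1) = mpoly (hedges ?U2)" unfolding m1 m2 e1 by (simp add: ac_simps)
  then have nm: "num_matchings ?U1 = num_matchings ?U2" by (rule num_matchings_eq[OF fU fU])
  have c1: "card (hverts ?U1) = Suc (m - 5) + (m - 5) * (r - 2) + (Suc (n - 1 - 2) + (n - 1 - 2) * (r - 2) + 2 * (r - 1))"
    by (rule card_U) (use assms in auto)
  have c2: "card (hverts ?U2) = Suc (n - 5) + (n - 5) * (r - 2) + (Suc (m - 1 - 2) + (m - 1 - 2) * (r - 2) + 2 * (r - 1))"
    by (rule card_U) (use assms in auto)
  have "(m - 5) * (r - 2) + (n - 1 - 2) * (r - 2) = (n - 5) * (r - 2) + (m - 1 - 2) * (r - 2)"
  proof -
    have "(m - 5) + (n - 1 - 2) = (n - 5) + (m - 1 - 2)" using assms by simp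
    then show ?thesis by (metis add_mult_distrib)
  qed
  moreover have "Suc (m - 5) + Suc (n - 1 - 2) = Suc (n - 5) + Suc (m - 1 - 2)" using assms by simp
  ultimately have "card (hverts ?U1) = card (hverts ?U2)" unfolding c1 c2 by linarith
  then show "matching_energy r ?U1 = matching_energy r ?U2" using nm by (rule matching_energy_eq)
qed


end
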